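(* Suppose the monotone likelihood ratio property holds: for all $\rho,\rho'\in\mathcal{R}$ with $\rho>\rho'$, $$\frac{\Pr\{R=\rho\mid Y=1\}}{\Pr\{R=\rho\mid Y=0\}}\ge\frac{\Pr\{R=\rho'\mid Y=1\}}{\Pr\{R=\rho'\mid Y=0\}}.$$ Then the accuracy $\theta(\epsilon)=\Pr\{Y_{\mathscr{A}_\epsilon(\mathbf{D})}=1\}$ of the exponential mechanism is increasing in $\epsilon\ge 0$.
   Context: There are $n$ individuals indexed by $\mathcal{N}=\{1,\dots,n\}$. Individual $i$ is described by a random tuple $(X_i,A_i,Y_i)$, where $X_i\in\mathcal{X}$ are observable features, $A_i\in\{0,1\}$ is a protected attribute and $Y_i\in\{0,1\}$ is a hidden qualification state; the tuples are i.i.d. with a common distribution $\mathsf{F}$, and $(X,A,Y)$ denotes a generic tuple with distribution $\mathsf{F}$. A fixed function $r:\mathcal{X}\to\mathcal{R}$ is given, where $\mathcal{R}=\{\rho_1,\dots,\rho_{n'}\}\subset[0,1]$ is finite with $\rho_1=0$, $\rho_{n'}=1$; $R_i=r(X_i)$ and $R=r(X)$. The database is $\mathbf{D}=(X_1,\dots,X_n)$. For $\epsilon\ge0$, the exponential mechanism $\mathscr{A}_\epsilon$, given realized scores $(r_1,\dots,r_n)$, selects individual $i$ with probability $\exp(\epsilon r_i/2)/\sum_{j=1}^n\exp(\epsilon r_j/2)$; $\mathscr{A}_\epsilon(\mathbf{D})$ denotes the selected index, and $Y_{\mathscr{A}_\epsilon(\mathbf{D})}$ the qualification state of the selected individual.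 *)

theory Defs
  imports "HOL-Probability.Probability"
begin

text \<open>A generic individual is a tuple (X, A, Y) :: 'x \<times> bool \<times> bool, where the
  protected attribute A and qualification Y are encoded as booleans (True = 1).\<close>

definition feat :: "'x \<times> bool \<times> bool \<Rightarrow> 'x" where "feat \<omega> = fst \<omega>"
definition qual :: "'x \<times> bool \<times> bool \<Rightarrow> bool" where "qual \<omega> = snd (snd \<omega>)"

definition score_cond :: "('x \<times> bool \<times> bool) measure \<Rightarrow> ('x \<Rightarrow> real) \<Rightarrow> real \<Rightarrow> bool \<Rightarrow> real" where
  "score_cond F r \<rho> y =
     measure F {\<omega> \<in> space F. r (feat \<omega>) = \<rho> \<and> qual \<omega> = y} / measure F {\<omega> \<in> space F. qual \<omega> = y}"

definition exp_mech_prob :: "real \<Rightarrow> nat \<Rightarrow> (nat \<Rightarrow> real) \<Rightarrow> nat \<Rightarrow> real" where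
  "exp_mech_prob \<epsilon> n sc i = exp (\<epsilon> * sc i / 2) / (\<Sum>j<n. exp (\<epsilon> * sc j / 2))"

text \<open>Accuracy theta(eps) = Pr{Y_{A_eps(D)} = 1}: the database consists of n i.i.d.
  tuples (product measure of n copies of F), and given the tuples the mechanism
  selects i with the exponential-mechanism probability.\<close>
definition accuracy :: "('x \<times> bool \<times> bool) measure \<Rightarrow> ('x \<Rightarrow> real) \<Rightarrow> nat \<Rightarrow> real \<Rightarrow> real" where
  "accuracy F r n \<epsilon> =
     (\<integral>\<omega>. (\<Sum>i<n. (if qual (\<omega> i) then exp_mech_prob \<epsilon> n (\<lambda>j. r (feat (\<omega> j))) i else 0))
        \<partial>(PiM {..<n} (\<lambda>_. F)))"

end

theory Submission
  imports Defs "HOL-Probability.Probability"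
begin


lemma core_ineq:
  fixes a c q :: "nat \<Rightarrow> real"
  assumes fin: "finite I" and apos: "\<And>i. i \<in> I \<Longrightarrow> a i > 0" and cpos: "\<And>i. i \<in> I \<Longrightarrow> c i > 0"
    and co: "\<And>i j. i \<in> I \<Longrightarrow> j \<in> I \<Longrightarrow> (q i - q j) * (c i - c j) \<ge> 0"
  shows "(\<Sum>i\<in>I. a i / (\<Sum>j\<in>I. a j) * q i) \<le> (\<Sum>i\<in>I. (a i * c i) / (\<Sum>j\<in>I. a j * c j) * q i)"
proof (cases "I = {}")
  case True then show ?thesis by simp
next
  case False
  define A where "A = (\<Sum>j\<in>I. a j)"
  define B where "B = (\<Sum>j\<in>I. a j * c j)"
  have A: "A > 0" unfolding A_def using fin False apos by (intro sum_pos) auto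
  have B: "B > 0" unfolding B_def using fin False apos cpos by (intro sum_pos) auto
  define X where "X = (\<Sum>i\<in>I. \<Sum>j\<in>I. a i * a j * ((q i - q j) * (c i - c j)))"
  have X0: "X \<ge> 0" unfolding X_def using apos co
    by (intro sum_nonneg) (metis apos co less_imp_le mult_nonneg_nonneg)
  have "X = (\<Sum>i\<in>I. \<Sum>j\<in>I. (a i * q i * c i) * a j + a i * (a j * q j * c j)
               - (a i * q i) * (a j * c j) - (a i * c i) * (a j * q j))"
    unfolding X_def by (intro sum.cong refl) (simp add: algebra_simps)
  also have "\<dots> = (\<Sum>i\<in>I. a i * q i * c i) * A + A * (\<Sum>i\<in>I. a i * q i * c i)
       - (\<Sum>i\<in>I. a i * q i) * B - B * (\<Sum>i\<in>I. a i * q i)"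
    unfolding A_def B_def sum_product by (simp add: sum.distrib sum_subtractf)
  finally have "X = 2 * ((\<Sum>i\<in>I. a i * q i * c i) * A - (\<Sum>i\<in>I. a i * q i) * B)"
    by (simp add: algebra_simps)
  with X0 have key: "(\<Sum>i\<in>I. a i * q i) * B \<le> (\<Sum>i\<in>I. a i * q i * c i) * A" by simp
  have l: "(\<Sum>i\<in>I. a i / A * q i) = (\<Sum>i\<in>I. a i * q i) / A"
    by (simp add: sum_divide_distrib)
  have r: "(\<Sum>i\<in>I. (a i * c i) / B * q i) = (\<Sum>i\<in>I. a i * q i * c i) / B"
    by (simp add: sum_divide_distrib algebra_simps)
  show ?thesis using key A B unfolding A_def[symmetric] B_def[symmetric] l r
    by (simp add: divide_simps mult.commute)
qed



definition pr :: "('x \<times> bool \<times> bool) measure \<Rightarrow> ('x \<Rightarrow> real) \<Rightarrow> real \<Rightarrow> bool \<Rightarrow> real" where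
  "pr F r \<rho> y = measure F {\<omega> \<in> space F. r (feat \<omega>) = \<rho> \<and> qual \<omega> = y}"

definition cc :: "real \<Rightarrow> nat \<Rightarrow> (nat \<Rightarrow> real) \<Rightarrow> (nat \<Rightarrow> bool) \<Rightarrow> real" where
  "cc \<epsilon> n \<rho> y = (\<Sum>i<n. if y i then exp (\<epsilon> * \<rho> i / 2) / (\<Sum>j<n. exp (\<epsilon> * \<rho> j / 2)) else 0)"

lemma repr:
  fixes F :: "('x \<times> bool \<times> bool) measure" and r :: "'x \<Rightarrow> real"
  assumes P: "prob_space F" and mr: "(\<lambda>\<omega>. r (feat \<omega>)) \<in> borel_measurable F"
    and mq: "qual \<in> measurable F (count_space UNIV)" and fR: "finite R" and rR: "\<forall>x. r x \<in> R"
  shows "accuracy F r n \<epsilon> = (\<Sum>\<rho>\<in>PiE {..<n} (\<lambda>_. R). \<Sum>y\<in>PiE {..<n} (\<lambda>_. UNIV).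
             cc \<epsilon> n \<rho> y * (\<Prod>j<n. pr F r (\<rho> j) (y j)))"
proof -
  define I where "I = {..<n}"
  define S where "S = (\<lambda>\<rho> y. {\<omega> \<in> space F. r (feat \<omega>) = \<rho> \<and> qual \<omega> = y})"
  define E where "E = (\<lambda>\<rho> y. PiE I (\<lambda>j. S (\<rho> j) (y j)))"
  define M where "M = PiM I (\<lambda>_. F)"
  interpret P: prob_space F by fact
  interpret PP: product_prob_space "\<lambda>_. F" I
    by (simp add: product_prob_space_def product_sigma_finite_def product_prob_space_axioms_def
        prob_space_imp_sigma_finite P)
  note [measurable] = mr mq
  have Ssets: "S \<rho> y \<in> sets F" for \<rho> y
    unfolding S_def by measurable
  have finI: "finite I" unfolding I_def by simp
  have fin1: "finite (PiE I (\<lambda>_. R))" using fR finI by (simp add: finite_PiE)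
  have fin2: "finite (PiE I (\<lambda>_. UNIV :: bool set))" using finI by (simp add: finite_PiE)
  have Esets: "E \<rho> y \<in> sets M" for \<rho> y
    unfolding E_def M_def using Ssets by (intro sets_PiM_I_finite finI) auto
  have Emeas: "measure M (E \<rho> y) = (\<Prod>j\<in>I. pr F r (\<rho> j) (y j))" for \<rho> y
  proof -
    have "emeasure M (E \<rho> y) = (\<Prod>j\<in>I. emeasure F (S (\<rho> j) (y j)))"
      unfolding M_def E_def using Ssets finI by (intro PP.emeasure_PiM) auto
    also have "\<dots> = (\<Prod>j\<in>I. ennreal (pr F r (\<rho> j) (y j)))"
      unfolding pr_def S_def by (intro prod.cong refl P.emeasure_eq_measure)
    also have "\<dots> = ennreal (\<Prod>j\<in>I. pr F r (\<rho> j) (y j))"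
      by (intro prod_ennreal) (simp add: pr_def)
    finally show ?thesis unfolding measure_def
      by (simp add: pr_def prod_nonneg)
  qed
  have pw: "(\<Sum>i\<in>I. (if qual (\<omega> i) then exp_mech_prob \<epsilon> n (\<lambda>j. r (feat (\<omega> j))) i else 0))
      = (\<Sum>\<rho>\<in>PiE I (\<lambda>_. R). \<Sum>y\<in>PiE I (\<lambda>_. UNIV). cc \<epsilon> n \<rho> y * indicator (E \<rho> y) \<omega>)"
    if \<omega>: "\<omega> \<in> space M" for \<omega>
  proof -
    define \<rho>0 where "\<rho>0 = restrict (\<lambda>j. r (feat (\<omega> j))) I"
    define y0 where "y0 = restrict (\<lambda>j. qual (\<omega> j)) I"
    have \<omega>': "\<omega> \<in> PiE I (\<lambda>_. space F)" using \<omega> unfolding M_def by (simp add: space_PiM)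
    have \<rho>0: "\<rho>0 \<in> PiE I (\<lambda>_. R)" unfolding \<rho>0_def using rR by auto
    have y0: "y0 \<in> PiE I (\<lambda>_. UNIV)" unfolding y0_def by auto
    have ind: "indicator (E \<rho> y) \<omega> = (if \<rho> = \<rho>0 then if y = y0 then 1 else 0 else 0 :: real)"
      if "\<rho> \<in> PiE I (\<lambda>_. R)" "y \<in> PiE I (\<lambda>_. UNIV)" for \<rho> y
    proof -
      have "\<omega> \<in> E \<rho> y \<longleftrightarrow> \<rho> = \<rho>0 \<and> y = y0"
      proof
        assume "\<omega> \<in> E \<rho> y"
        then have h: "\<And>j. j \<in> I \<Longrightarrow> r (feat (\<omega> j)) = \<rho> j \<and> qual (\<omega> j) = y j"
          unfolding E_def S_def by (simp add: PiE_iff)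
        have "\<rho> j = \<rho>0 j" for j
        proof (cases "j \<in> I")
          case True then show ?thesis using h[OF True] unfolding \<rho>0_def restrict_apply' [OF True] by simp
        next
          case False then show ?thesis using PiE_arb[OF that(1) False] unfolding \<rho>0_def by simp
        qed
        moreover have "y j = y0 j" for j
        proof (cases "j \<in> I")
          case True then show ?thesis using h[OF True] unfolding y0_def restrict_apply' [OF True] by simp
        next
          case False then show ?thesis using PiE_arb[OF that(2) False] unfolding y0_def by simp
        qed
        ultimately show "\<rho> = \<rho>0 \<and> y = y0" by (simp add: fun_eq_iff)
      next
        assume "\<rho> = \<rho>0 \<and> y = y0"
        then show "\<omega> \<in> E \<rho> y" using \<omega>' unfolding E_def S_def \<rho>0_def y0_def by (simp add: PiE_iff)
      qed
      then show ?thesis by (auto simp: indicator_def)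
    qed
    have "(\<Sum>\<rho>\<in>PiE I (\<lambda>_. R). \<Sum>y\<in>PiE I (\<lambda>_. UNIV). cc \<epsilon> n \<rho> y * indicator (E \<rho> y) \<omega>)
        = (\<Sum>\<rho>\<in>PiE I (\<lambda>_. R). if \<rho> = \<rho>0 then (\<Sum>y\<in>PiE I (\<lambda>_. UNIV). if y = y0 then cc \<epsilon> n \<rho> y else 0) else 0)"
      using ind by (intro sum.cong refl) (auto intro!: sum.cong)
    also have "\<dots> = cc \<epsilon> n \<rho>0 y0" using \<rho>0 y0 fin1 fin2 by (simp add: sum.delta)
    also have "\<dots> = (\<Sum>i\<in>I. (if qual (\<omega> i) then exp_mech_prob \<epsilon> n (\<lambda>j. r (feat (\<omega> j))) i else 0))"
      unfolding cc_def exp_mech_prob_def \<rho>0_def y0_def I_def by (intro sum.cong) auto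
    finally show ?thesis by simp
  qed
  have "accuracy F r n \<epsilon> = integral\<^sup>L M (\<lambda>\<omega>. \<Sum>\<rho>\<in>PiE I (\<lambda>_. R). \<Sum>y\<in>PiE I (\<lambda>_. UNIV). cc \<epsilon> n \<rho> y * indicator (E \<rho> y) \<omega>)"
    unfolding accuracy_def M_def[symmetric] I_def[symmetric] by (intro Bochner_Integration.integral_cong refl pw)
  also have "\<dots> = (\<Sum>\<rho>\<in>PiE I (\<lambda>_. R). \<Sum>y\<in>PiE I (\<lambda>_. UNIV). cc \<epsilon> n \<rho> y * measure M (E \<rho> y))"
  proof -
    have "emeasure M (E \<rho> y) < \<infinity>" for \<rho> y
      using prob_space.emeasure_le_1[OF prob_space_PiM[of I "\<lambda>_. F"], OF P, of "E \<rho> y"]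
      unfolding M_def[symmetric] by (metis ennreal_one_less_top infinity_ennreal_def le_less_trans)
    then have int: "integrable M (\<lambda>\<omega>. cc \<epsilon> n \<rho> y * indicator (E \<rho> y) \<omega>)" for \<rho> y
      by (intro integrable_mult_right integrable_real_indicator Esets)
    have "integral\<^sup>L M (\<lambda>\<omega>. \<Sum>\<rho>\<in>PiE I (\<lambda>_. R). \<Sum>y\<in>PiE I (\<lambda>_. UNIV). cc \<epsilon> n \<rho> y * indicator (E \<rho> y) \<omega>)
       = (\<Sum>\<rho>\<in>PiE I (\<lambda>_. R). integral\<^sup>L M (\<lambda>\<omega>. \<Sum>y\<in>PiE I (\<lambda>_. UNIV). cc \<epsilon> n \<rho> y * indicator (E \<rho> y) \<omega>))"
      by (rule Bochner_Integration.integral_sum) (intro Bochner_Integration.integrable_sum int)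
    also have "\<dots> = (\<Sum>\<rho>\<in>PiE I (\<lambda>_. R). \<Sum>y\<in>PiE I (\<lambda>_. UNIV). integral\<^sup>L M (\<lambda>\<omega>. cc \<epsilon> n \<rho> y * indicator (E \<rho> y) \<omega>))"
      by (intro sum.cong refl Bochner_Integration.integral_sum int)
    also have "\<dots> = (\<Sum>\<rho>\<in>PiE I (\<lambda>_. R). \<Sum>y\<in>PiE I (\<lambda>_. UNIV). cc \<epsilon> n \<rho> y * measure M (E \<rho> y))"
    proof (intro sum.cong refl)
      fix \<rho> y
      have "integral\<^sup>L M (\<lambda>\<omega>. cc \<epsilon> n \<rho> y * indicator (E \<rho> y) \<omega>) = cc \<epsilon> n \<rho> y * integral\<^sup>L M (indicator (E \<rho> y))"
        by (rule integral_mult_right_zero)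
      also have "integral\<^sup>L M (indicator (E \<rho> y)) = measure M (E \<rho> y \<inter> space M)"
        by (rule Bochner_Integration.integral_indicator)
      also have "E \<rho> y \<inter> space M = E \<rho> y" by (rule sets.Int_space_eq2[OF Esets])
      finally show "integral\<^sup>L M (\<lambda>\<omega>. cc \<epsilon> n \<rho> y * indicator (E \<rho> y) \<omega>) = cc \<epsilon> n \<rho> y * measure M (E \<rho> y)" .
    qed
    finally show ?thesis .
  qed
  finally show ?thesis unfolding Emeas I_def .
qed



lemma ysum:
  fixes p :: "real \<Rightarrow> bool \<Rightarrow> real" and w :: "nat \<Rightarrow> real"
  assumes fin: "finite I"
  shows "(\<Sum>y\<in>PiE I (\<lambda>_. UNIV). (\<Sum>i\<in>I. if y i then w i else 0) * (\<Prod>j\<in>I. p (\<rho> j) (y j)))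
       = (\<Sum>i\<in>I. w i * (\<Prod>j\<in>I. if j = i then p (\<rho> j) True else p (\<rho> j) True + p (\<rho> j) False))"
proof -
  have fin2: "finite (PiE I (\<lambda>_. UNIV :: bool set))" using fin by (simp add: finite_PiE)
  have "(\<Sum>y\<in>PiE I (\<lambda>_. UNIV). (\<Sum>i\<in>I. if y i then w i else 0) * (\<Prod>j\<in>I. p (\<rho> j) (y j)))
      = (\<Sum>i\<in>I. \<Sum>y\<in>PiE I (\<lambda>_. UNIV). (if y i then w i else 0) * (\<Prod>j\<in>I. p (\<rho> j) (y j)))"
    by (simp add: sum_distrib_right sum.swap[of _ I])
  also have "\<dots> = (\<Sum>i\<in>I. w i * (\<Prod>j\<in>I. if j = i then p (\<rho> j) True else p (\<rho> j) True + p (\<rho> j) False))"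
  proof (intro sum.cong refl)
    fix i assume i: "i \<in> I"
    define f where "f = (\<lambda>j b. if j = i then (if b then p (\<rho> j) b else 0) else p (\<rho> j) b)"
    have e: "(if y i then w i else 0) * (\<Prod>j\<in>I. p (\<rho> j) (y j)) = w i * (\<Prod>j\<in>I. f j (y j))" for y
    proof (cases "y i")
      case True
      then have "(\<Prod>j\<in>I. f j (y j)) = (\<Prod>j\<in>I. p (\<rho> j) (y j))"
        unfolding f_def by (intro prod.cong refl) auto
      then show ?thesis using True by simp
    next
      case False
      then have "(\<Prod>j\<in>I. f j (y j)) = 0"
        using fin i unfolding f_def by (intro prod_zero) auto
      then show ?thesis using False by simp
    qed
    have "(\<Sum>y\<in>PiE I (\<lambda>_. UNIV). (if y i then w i else 0) * (\<Prod>j\<in>I. p (\<rho> j) (y j)))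
        = w i * (\<Sum>y\<in>PiE I (\<lambda>_. UNIV). \<Prod>j\<in>I. f j (y j))"
      by (simp add: e sum_distrib_left)
    also have "(\<Sum>y\<in>PiE I (\<lambda>_. UNIV). \<Prod>j\<in>I. f j (y j)) = (\<Prod>j\<in>I. \<Sum>b\<in>UNIV. f j b)"
      by (rule prod_sum_PiE[symmetric]) (use fin in auto)
    also have "\<dots> = (\<Prod>j\<in>I. if j = i then p (\<rho> j) True else p (\<rho> j) True + p (\<rho> j) False)"
      unfolding f_def by (intro prod.cong refl) (simp add: UNIV_bool)
    finally show "(\<Sum>y\<in>PiE I (\<lambda>_. UNIV). (if y i then w i else 0) * (\<Prod>j\<in>I. p (\<rho> j) (y j)))
        = w i * (\<Prod>j\<in>I. if j = i then p (\<rho> j) True else p (\<rho> j) True + p (\<rho> j) False)" .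
  qed
  finally show ?thesis .
qed



lemma perrho:
  fixes p :: "real \<Rightarrow> bool \<Rightarrow> real" and \<rho> :: "nat \<Rightarrow> real"
  assumes fin: "finite I" and pnn: "\<And>x b. p x b \<ge> 0"
    and mlr: "\<And>j k. j \<in> I \<Longrightarrow> k \<in> I \<Longrightarrow> \<rho> j > \<rho> k \<Longrightarrow>
                p (\<rho> j) True * p (\<rho> k) False \<ge> p (\<rho> k) True * p (\<rho> j) False"
    and ee: "e \<le> e'"
  shows "(\<Sum>i\<in>I. exp (e * \<rho> i / 2) / (\<Sum>j\<in>I. exp (e * \<rho> j / 2)) *
            (\<Prod>j\<in>I. if j = i then p (\<rho> j) True else p (\<rho> j) True + p (\<rho> j) False))
       \<le> (\<Sum>i\<in>I. exp (e' * \<rho> i / 2) / (\<Sum>j\<in>I. exp (e' * \<rho> j / 2)) *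
            (\<Prod>j\<in>I. if j = i then p (\<rho> j) True else p (\<rho> j) True + p (\<rho> j) False))"
proof -
  define m where "m = (\<lambda>j. p (\<rho> j) True + p (\<rho> j) False)"
  define G where "G = (\<lambda>i. \<Prod>j\<in>I. if j = i then p (\<rho> j) True else p (\<rho> j) True + p (\<rho> j) False)"
  show ?thesis
  proof (cases "\<exists>k\<in>I. m k = 0")
    case True
    then obtain k where k: "k \<in> I" "m k = 0" by blast
    have pk: "p (\<rho> k) True = 0" using k pnn[of "\<rho> k" True] pnn[of "\<rho> k" False] unfolding m_def by linarith
    have "G i = 0" for i
      unfolding G_def using fin k pk unfolding m_def by (intro prod_zero) (auto intro!: bexI[of _ k])
    then show ?thesis unfolding G_def by simp
  next
    case False
    then have mpos: "m j > 0" if "j \<in> I" for j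
      using that pnn[of "\<rho> j" True] pnn[of "\<rho> j" False] unfolding m_def
      by (metis add_nonneg_nonneg order_le_less)
    define q where "q = (\<lambda>j. p (\<rho> j) True / m j)"
    define Mp where "Mp = (\<Prod>j\<in>I. m j)"
    have Mp: "Mp \<ge> 0" unfolding Mp_def using mpos by (intro prod_nonneg) (auto intro: less_imp_le)
    have G: "G i = q i * Mp" if i: "i \<in> I" for i
    proof -
      have "G i = (\<Prod>j\<in>I. (if j = i then q j else 1) * m j)"
        unfolding G_def q_def m_def[symmetric] using mpos
        by (intro prod.cong refl) (auto simp: m_def dest!: mpos)
      also have "\<dots> = (\<Prod>j\<in>I. (if j = i then q j else 1)) * Mp"
        unfolding Mp_def by (rule prod.distrib)
      also have "(\<Prod>j\<in>I. (if j = i then q j else 1)) = q i"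
        using fin i by (simp add: prod.delta)
      finally show ?thesis .
    qed
    have qmono: "q j \<ge> q k" if "j \<in> I" "k \<in> I" "\<rho> j > \<rho> k" for j k
    proof -
      have "p (\<rho> k) True * m j \<le> p (\<rho> j) True * m k"
        using mlr[OF that] unfolding m_def by (simp add: algebra_simps)
      then show ?thesis unfolding q_def using mpos[OF that(1)] mpos[OF that(2)]
        by (simp add: divide_simps mult.commute)
    qed
    define a where "a = (\<lambda>i. exp (e * \<rho> i / 2))"
    define c where "c = (\<lambda>i. exp ((e' - e) * \<rho> i / 2))"
    have ac: "a i * c i = exp (e' * \<rho> i / 2)" for i
      unfolding a_def c_def by (simp add: exp_add[symmetric] field_simps)
    have cmono: "c j \<ge> c k" if "\<rho> j > \<rho> k" for j k
      unfolding c_def using ee that by (simp add: mult_left_mono)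
    have co: "(q i * Mp - q j * Mp) * (c i - c j) \<ge> 0" if "i \<in> I" "j \<in> I" for i j
    proof (cases "\<rho> i > \<rho> j")
      case True
      then show ?thesis using qmono[OF that True] cmono[OF True] Mp
        by (intro mult_nonneg_nonneg) (auto simp: algebra_simps intro: mult_left_mono)
    next
      case False
      show ?thesis
      proof (cases "\<rho> i < \<rho> j")
        case True
        then have "(q j * Mp - q i * Mp) * (c j - c i) \<ge> 0"
          using qmono[OF that(2,1) True] cmono[OF True] Mp
          by (intro mult_nonneg_nonneg) (auto simp: algebra_simps intro: mult_left_mono)
        then show ?thesis by (simp add: algebra_simps)
      next
        case False
        with \<open>\<not> \<rho> i > \<rho> j\<close> have "\<rho> i = \<rho> j" by simp
        then show ?thesis unfolding c_def by simp
      qed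
    qed
    have "(\<Sum>i\<in>I. a i / (\<Sum>j\<in>I. a j) * (q i * Mp)) \<le> (\<Sum>i\<in>I. (a i * c i) / (\<Sum>j\<in>I. a j * c j) * (q i * Mp))"
      by (rule core_ineq[OF fin]) (use co in \<open>auto simp: a_def c_def\<close>)
    then have "(\<Sum>i\<in>I. a i / (\<Sum>j\<in>I. a j) * G i) \<le> (\<Sum>i\<in>I. exp (e' * \<rho> i / 2) / (\<Sum>j\<in>I. exp (e' * \<rho> j / 2)) * G i)"
      unfolding ac using G by (simp cong: sum.cong)
    then show ?thesis unfolding G_def a_def .
  qed
qed



theorem theorem4:
  fixes F :: "('x \<times> bool \<times> bool) measure"
    and r :: "'x \<Rightarrow> real"
    and \<R> :: "real set"
    and n :: nat
  assumes "prob_space F"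
    and "(\<lambda>\<omega>. r (feat \<omega>)) \<in> borel_measurable F"
    and "qual \<in> measurable F (count_space UNIV)"
    and "finite \<R>" and "\<R> \<subseteq> {0..1}" and "0 \<in> \<R>" and "1 \<in> \<R>"
    and "\<forall>x. r x \<in> \<R>"
    and MLR: "\<forall>\<rho>\<in>\<R>. \<forall>\<rho>'\<in>\<R>. \<rho> > \<rho>' \<longrightarrow>
               score_cond F r \<rho> True * score_cond F r \<rho>' False
                 \<ge> score_cond F r \<rho>' True * score_cond F r \<rho> False"
  shows "mono_on {0..} (accuracy F r n)"
proof -
  interpret P: prob_space F by fact
  note [measurable] = assms(2,3)
  have pnn: "pr F r x b \<ge> 0" for x b unfolding pr_def by simp
  define Q where "Q = (\<lambda>y. measure F {\<omega> \<in> space F. qual \<omega> = y})"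
  have Qs: "{\<omega> \<in> space F. qual \<omega> = y} \<in> sets F" for y by measurable
  have prQ: "pr F r x y \<le> Q y" for x y
    unfolding pr_def Q_def by (intro P.finite_measure_mono Qs) auto
  have sc: "score_cond F r x y = pr F r x y / Q y" for x y
    unfolding score_cond_def pr_def Q_def ..
  have mlr: "pr F r \<rho> True * pr F r \<rho>' False \<ge> pr F r \<rho>' True * pr F r \<rho> False"
    if "\<rho> \<in> \<R>" "\<rho>' \<in> \<R>" "\<rho> > \<rho>'" for \<rho> \<rho>'
  proof (cases "Q True = 0 \<or> Q False = 0")
    case True
    then show ?thesis
    proof
      assume "Q True = 0"
      then have "pr F r x True = 0" for x using prQ[of x True] pnn[of x True] by simp
      then show ?thesis by simp
    next
      assume "Q False = 0"
      then have "pr F r x False = 0" for x using prQ[of x False] pnn[of x False] by simp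
      then show ?thesis by simp
    qed
  next
    case False
    then have Q: "Q True > 0" "Q False > 0" unfolding Q_def
      by (metis measure_nonneg order_le_less)+
    have "pr F r \<rho>' True / Q True * (pr F r \<rho> False / Q False) \<le> pr F r \<rho> True / Q True * (pr F r \<rho>' False / Q False)"
      using MLR that by (simp add: sc)
    then show ?thesis using Q by (simp add: divide_simps)
  qed
  show ?thesis
  proof (rule mono_onI)
    fix e e' :: real assume "e \<in> {0..}" "e' \<in> {0..}" "e \<le> e'"
    have "accuracy F r n e = (\<Sum>\<rho>\<in>PiE {..<n} (\<lambda>_. \<R>). \<Sum>i<n. exp (e * \<rho> i / 2) / (\<Sum>j<n. exp (e * \<rho> j / 2)) *
            (\<Prod>j<n. if j = i then pr F r (\<rho> j) True else pr F r (\<rho> j) True + pr F r (\<rho> j) False))"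
      unfolding repr[OF assms(1-4,8)] cc_def by (intro sum.cong refl ysum) simp
    also have "\<dots> \<le> (\<Sum>\<rho>\<in>PiE {..<n} (\<lambda>_. \<R>). \<Sum>i<n. exp (e' * \<rho> i / 2) / (\<Sum>j<n. exp (e' * \<rho> j / 2)) *
            (\<Prod>j<n. if j = i then pr F r (\<rho> j) True else pr F r (\<rho> j) True + pr F r (\<rho> j) False))"
      using \<open>e \<le> e'\<close> by (intro sum_mono perrho) (auto simp: PiE_iff intro!: mlr pnn)
    also have "\<dots> = accuracy F r n e'"
      unfolding repr[OF assms(1-4,8)] cc_def by (intro sum.cong refl ysum[symmetric]) simp
    finally show "accuracy F r n e \<le> accuracy F r n e'" .
  qed
qed


end
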